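(* Let $k>1$ and let $\mathrm{tHyperCom}_k$ be the twisted associative algebra generated, for each $d\geqslant0$, by an $S_{1+d(k-1)}$-invariant element $\mathsf m^{2d}$ of arity $1+d(k-1)$ and homological degree $2d$, subject to: for each $d\geqslant0$, $n=2+d(k-1)$, and $i_1\neq i_2\in\underline n$, \[ \sum_{d_1+d_2=d}\ \sum_{\substack{\underline n=I_1\sqcup I_2,\ i_1\in I_1,\ i_2\in I_2\\ |I_1|=1+d_1(k-1),\ |I_2|=1+d_2(k-1)}}\mathsf m^{2d_1}_{I_1}\mathsf m^{2d_2}_{I_2} =\sum_{d_1+d_2=d}\ \sum_{\substack{\underline n=I_1\sqcup I_2,\ i_1\in I_1,\ i_2\in I_2\\ |I_1|=1+d_1(k-1),\ |I_2|=1+d_2(k-1)}}\mathsf m^{2d_2}_{I_2}\mathsf m^{2d_1}_{I_1}. \] Then for every $n\geqslant1$, $\dim\mathrm{tHyperCom}_k^!(\underline n)=\sum_{p=0}^{n}\binom{n-1}{p(k-1)}$.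
   Context: Work over a field $\Bbbk$ of characteristic zero, homologically graded vector spaces; $\underline n=\{1,\dots,n\}$. A twisted associative algebra is a monoid in species for the Cauchy product; for an $S_t$-invariant element $\mathsf x$ of arity $t$, $\mathsf x_I$ is its relabeling to the $t$-element set $I$; relations are imposed with all relabelings. For a quadratic twisted associative algebra $\mathcal A$, the Koszul dual coalgebra $\mathcal A^{¡}$ is the diagonal part (syzygy degree equal to weight) of the homology of the bar construction, and the Koszul dual algebra is $\mathcal A^!(n)=\mathsf S^{-1}(n)\otimes(\mathcal A^{¡}(n))^*$, with $\mathsf S^{-1}(n)=(\Bbbk s)^{\otimes n}$ one-dimensional; dimensions are total dimensions over all degrees. *)

theory Defs
  imports Complex_Main "HOL-Library.Function_Algebras"
begin

(* Vectors of a species component are finitely supported functions on a basis;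
   a basis element of weight w of the free twisted associative algebra on the
   generators m^{2d} in arity S is an ordered list [I_1,...,I_w] of pairwise
   disjoint blocks covering S, each block I_j labelling m^{2d_j}_{I_j} with
   |I_j| = 1 + d_j (k-1). *)

definition scl :: "'a::field \<Rightarrow> (nat set list \<Rightarrow> 'a) \<Rightarrow> (nat set list \<Rightarrow> 'a)" where
  "scl c f = (\<lambda>L. c * f L)"

lemma vector_space_scl: "vector_space (scl :: 'a::field \<Rightarrow> _)"
  unfolding vector_space_def scl_def by (auto simp: fun_eq_iff algebra_simps)

definition gen_arity :: "nat \<Rightarrow> nat set \<Rightarrow> bool" where
  "gen_arity k I \<longleftrightarrow> (\<exists>d. card I = 1 + d * (k - 1))"

definition ordpart :: "nat \<Rightarrow> nat set \<Rightarrow> nat set list \<Rightarrow> bool" where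
  "ordpart k S Is \<longleftrightarrow> (\<forall>I\<in>set Is. gen_arity k I)
     \<and> (\<forall>i<length Is. \<forall>j<length Is. i \<noteq> j \<longrightarrow> Is ! i \<inter> Is ! j = {})
     \<and> \<Union>(set Is) = S"

(* relabelling to T (|T| = 2 + d(k-1)) of the relation for the pair i1 \<noteq> i2:
   sum over I1 \<sqcup> I2 = T, i1\<in>I1, i2\<in>I2 of m_{I1} m_{I2} - m_{I2} m_{I1} *)
definition rel :: "nat \<Rightarrow> nat set \<Rightarrow> nat \<Rightarrow> nat \<Rightarrow> nat set list \<Rightarrow> 'a::field" where
  "rel k T i1 i2 L = (if length L = 2 \<and> ordpart k T L then
       (if i1 \<in> L ! 0 \<and> i2 \<in> L ! 1 then 1 else 0)
     - (if i2 \<in> L ! 0 \<and> i1 \<in> L ! 1 then 1 else 0) else 0)"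

definition rels :: "nat \<Rightarrow> nat set \<Rightarrow> (nat set list \<Rightarrow> 'a::field) set" where
  "rels k T = {rel k T i1 i2 | i1 i2. i1 \<in> T \<and> i2 \<in> T \<and> i1 \<noteq> i2
                 \<and> (\<exists>d. card T = 2 + d * (k - 1))}"

(* Koszul dual coalgebra tHyperCom_k^{\<exclamdown>}(S): diagonal part of the bar homology,
   i.e. the elements of the (weight-graded) cofree part spanned by monomials in
   the generators all of whose adjacent two-letter slices lie in the relations *)
definition koszul_coalg :: "nat \<Rightarrow> nat set \<Rightarrow> (nat set list \<Rightarrow> 'a::field) set" where
  "koszul_coalg k S = {x. (\<forall>Is. \<not> ordpart k S Is \<longrightarrow> x Is = 0)
      \<and> (\<forall>pre post. (\<lambda>L. if length L = 2 then x (pre @ L @ post) else 0)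
             \<in> module.span scl (rels k (S - \<Union>(set pre) - \<Union>(set post))))}"

(* dim tHyperCom_k^!(S) = dim (S^{-1}(S) \<otimes> (tHyperCom_k^{\<exclamdown>}(S))^* ) = dim tHyperCom_k^{\<exclamdown>}(S) *)
definition dual_dim :: "'a::field itself \<Rightarrow> nat \<Rightarrow> nat set \<Rightarrow> nat" where
  "dual_dim _ k S = vector_space.dim (scl :: 'a \<Rightarrow> _) (koszul_coalg k S)"

end

theory Submission
  imports Defs
begin

interpretation V: vector_space "scl :: 'a::field \<Rightarrow> (nat set list \<Rightarrow> 'a) \<Rightarrow> _"
  by (rule vector_space_scl)

lemma scl_apply[simp]: "scl c f L = c * f L"
  by (simp add: scl_def)

lemma sum_fun_apply: "(\<Sum>a\<in>A. f a) x = (\<Sum>a\<in>A. f a x)"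
  by (induction A rule: infinite_finite_induct) auto

fun pd :: "nat set list \<Rightarrow> bool" where
  "pd [] = True"
| "pd (B # Bs) = (B \<inter> \<Union>(set Bs) = {} \<and> pd Bs)"

lemma pd_iff: "(\<forall>i<length Bs. \<forall>j<length Bs. i \<noteq> j \<longrightarrow> Bs!i \<inter> Bs!j = {}) \<longleftrightarrow> pd Bs"
proof (induction Bs)
  case Nil
  then show ?case by simp
next
  case (Cons B Bs)
  show ?case
  proof
    assume H: "\<forall>i<length (B # Bs). \<forall>j<length (B # Bs). i \<noteq> j \<longrightarrow> (B # Bs) ! i \<inter> (B # Bs) ! j = {}"
    have 1: "B \<inter> \<Union>(set Bs) = {}"
    proof -
      { fix x C assume "x \<in> B" "C \<in> set Bs" "x \<in> C"
        then obtain j where "j < length Bs" "Bs ! j = C" by (auto simp: in_set_conv_nth)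
        with H[rule_format, of 0 "Suc j"] \<open>x \<in> B\<close> \<open>x \<in> C\<close> have False by auto }
      then show ?thesis by blast
    qed
    have "\<forall>i<length Bs. \<forall>j<length Bs. i \<noteq> j \<longrightarrow> Bs!i \<inter> Bs!j = {}"
      using H by (metis Suc_inject length_Cons not_less_eq nth_Cons_Suc)
    with Cons 1 show "pd (B # Bs)" by simp
  next
    assume H: "pd (B # Bs)"
    then have 1: "B \<inter> \<Union>(set Bs) = {}" and 2: "pd Bs" by auto
    with Cons have 3: "\<forall>i<length Bs. \<forall>j<length Bs. i \<noteq> j \<longrightarrow> Bs!i \<inter> Bs!j = {}" by simp
    show "\<forall>i<length (B # Bs). \<forall>j<length (B # Bs). i \<noteq> j \<longrightarrow> (B # Bs) ! i \<inter> (B # Bs) ! j = {}"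
    proof (intro allI impI)
      fix i j assume "i < length (B # Bs)" "j < length (B # Bs)" "i \<noteq> j"
      then show "(B # Bs) ! i \<inter> (B # Bs) ! j = {}"
        using 1 3 by (cases i; cases j) (auto dest: nth_mem)
    qed
  qed
qed

lemma ordpart_alt: "ordpart k S Bs \<longleftrightarrow> (\<forall>B\<in>set Bs. gen_arity k B) \<and> pd Bs \<and> \<Union>(set Bs) = S"
  unfolding ordpart_def pd_iff ..

lemma pd_append: "pd (xs @ ys) \<longleftrightarrow> pd xs \<and> pd ys \<and> \<Union>(set xs) \<inter> \<Union>(set ys) = {}"
  by (induction xs) auto

lemma ordpart_mid:
  assumes "ordpart k S (pre @ Ls0 @ post)"
  shows "ordpart k S (pre @ Ls @ post) \<longleftrightarrow> ordpart k (S - \<Union>(set pre) - \<Union>(set post)) Ls"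
  using assms unfolding ordpart_alt pd_append by auto

lemma ordpart_swap: "ordpart k T [A, B] \<longleftrightarrow> ordpart k T [B, A]"
  unfolding ordpart_alt by auto

lemma gen_arity_single: "gen_arity k {l}"
  unfolding gen_arity_def by (rule exI[of _ 0]) simp

lemma gen_arity_finite: "gen_arity k A \<Longrightarrow> finite A"
  unfolding gen_arity_def by (metis add_is_0 card.infinite zero_neq_one)

lemma ordpart_singles: "ordpart k T (map (\<lambda>l. {l}) ls) \<longleftrightarrow> distinct ls \<and> set ls = T"
proof -
  have "pd (map (\<lambda>l. {l}) ls) \<longleftrightarrow> distinct ls" by (induction ls) auto
  then show ?thesis unfolding ordpart_alt by (auto simp: gen_arity_single)
qed

lemma gen_arity_union_minus:
  assumes "gen_arity k A" "gen_arity k B" "A \<inter> B = {}" "l \<in> B"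
  shows "gen_arity k (A \<union> B - {l})"
proof -
  obtain d1 d2 where d: "card A = 1 + d1 * (k - 1)" "card B = 1 + d2 * (k - 1)"
    using assms unfolding gen_arity_def by auto
  have f: "finite A" "finite B" using assms gen_arity_finite by auto
  have "card (A \<union> B - {l}) = card A + card B - 1"
    using f assms by (simp add: card_Un_disjoint)
  also have "\<dots> = 1 + (d1 + d2) * (k - 1)" using d by (simp only: add_mult_distrib)
  finally show ?thesis unfolding gen_arity_def by blast
qed

lemma card_two_blocks:
  assumes "ordpart k T [A, B]"
  shows "\<exists>d. card T = 2 + d * (k - 1)"
proof -
  have g: "gen_arity k A" "gen_arity k B" and dj: "A \<inter> B = {}" and T: "T = A \<union> B"
    using assms unfolding ordpart_alt by auto
  obtain d1 d2 where d: "card A = 1 + d1 * (k - 1)" "card B = 1 + d2 * (k - 1)"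
    using g unfolding gen_arity_def by auto
  have f: "finite A" "finite B" using g gen_arity_finite by auto
  have "card T = 2 + (d1 + d2) * (k - 1)"
    using f dj d T by (simp add: card_Un_disjoint add_mult_distrib)
  then show ?thesis by blast
qed

lemma rel_prop:
  assumes pq: "p \<in> T" "q \<in> T" "p \<noteq> q" and cT: "card T = 2 + d * (k - 1)"
    and AB: "ordpart k T [A, B]"
  shows "(rel k T p q [A, B] :: 'a::field) = - rel k T p q [B, A]
     \<and> (rel k T p q [A, B] :: 'a) = (\<Sum>l\<in>B. rel k T p q [T - {l}, {l}])"
proof -
  have BA: "ordpart k T [B, A]" using AB ordpart_swap by blast
  have dj: "A \<inter> B = {}" and T: "T = A \<union> B" and gB: "gen_arity k B"
    using AB unfolding ordpart_alt by auto
  have fB: "finite B" using gB gen_arity_finite by auto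
  have fT: "finite T" using cT by (metis card.infinite zero_neq_numeral add_is_0)
  have op: "ordpart k T [T - {l}, {l}]" if "l \<in> B" for l
  proof -
    have "card (T - {l}) = 1 + d * (k - 1)" using that T cT fT by simp
    then show ?thesis unfolding ordpart_alt gen_arity_def using that T
      by (auto simp: gen_arity_single gen_arity_def)
  qed
  have "(\<Sum>l\<in>B. (rel k T p q [T - {l}, {l}] :: 'a))
      = (\<Sum>l\<in>B. (if q = l then 1 else 0) - (if p = l then 1 else 0))"
    by (rule sum.cong) (use op pq in \<open>auto simp: rel_def\<close>)
  also have "\<dots> = (if q \<in> B then 1 else 0) - (if p \<in> B then 1 else 0)"
    using fB by (simp add: sum_subtractf)
  finally have s: "(\<Sum>l\<in>B. (rel k T p q [T - {l}, {l}] :: 'a))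
      = (if q \<in> B then 1 else 0) - (if p \<in> B then 1 else 0)" .
  show ?thesis
    unfolding s using AB BA dj T pq by (auto simp: rel_def)
qed

lemma span_rels_prop:
  assumes "f \<in> module.span scl (rels k T)" "ordpart k T [A, B]"
  shows "(f :: nat set list \<Rightarrow> 'a::field) [A, B] = - f [B, A] \<and> f [A, B] = (\<Sum>l\<in>B. f [T - {l}, {l}])"
  using assms(1)
proof (induction rule: V.span_induct_alt)
  case base
  then show ?case by simp
next
  case (step c x y)
  from step.hyps(1) obtain p q d where x: "x = rel k T p q" "p \<in> T" "q \<in> T" "p \<noteq> q"
    "card T = 2 + d * (k - 1)" unfolding rels_def by auto
  have r: "x [A, B] = - x [B, A] \<and> x [A, B] = (\<Sum>l\<in>B. x [T - {l}, {l}])"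
    using rel_prop[OF x(2-5) assms(2)] x(1) by simp
  have e1: "(scl c x + y) [A, B] = - (scl c x + y) [B, A]" using r step.IH by simp
  have "(scl c x + y) [A, B] = c * (\<Sum>l\<in>B. x [T - {l}, {l}]) + (\<Sum>l\<in>B. y [T - {l}, {l}])"
    using conjunct2[OF r] conjunct2[OF step.IH] by simp
  also have "\<dots> = (\<Sum>l\<in>B. (scl c x + y) [T - {l}, {l}])"
    by (simp add: sum.distrib sum_distrib_left)
  finally show ?case using e1 by simp
qed

definition slice :: "(nat set list \<Rightarrow> 'a::field) \<Rightarrow> nat set list \<Rightarrow> nat set list \<Rightarrow> nat set list \<Rightarrow> 'a" where
  "slice y pre post = (\<lambda>L. if length L = 2 then y (pre @ L @ post) else 0)"

lemma koszul_slice: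
  assumes "y \<in> koszul_coalg k S"
  shows "slice y pre post \<in> module.span scl (rels k (S - \<Union>(set pre) - \<Union>(set post)))"
  using assms unfolding koszul_coalg_def slice_def by auto

lemma koszul_zero:
  assumes "y \<in> koszul_coalg k S" "\<not> ordpart k S Bs"
  shows "y Bs = 0"
  using assms unfolding koszul_coalg_def by auto

lemma S12:
  assumes y: "y \<in> koszul_coalg k S" and op: "ordpart k S (pre @ [A, B] @ post)"
  shows "y (pre @ [A, B] @ post) = - y (pre @ [B, A] @ post)
    \<and> y (pre @ [A, B] @ post) = (\<Sum>l\<in>B. y (pre @ [A \<union> B - {l}, {l}] @ post))"
proof -
  let ?T = "S - \<Union>(set pre) - \<Union>(set post)"
  have opT: "ordpart k ?T [A, B]" using ordpart_mid[OF op] op by blast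
  have T: "?T = A \<union> B" using opT unfolding ordpart_alt by auto
  have "slice y pre post [A, B] = - slice y pre post [B, A] \<and> slice y pre post [A, B] = (\<Sum>l\<in>B. slice y pre post [?T - {l}, {l}])"
    by (rule span_rels_prop[OF koszul_slice[OF y] opT])
  then have e1: "slice y pre post [A, B] = - slice y pre post [B, A]"
    and e2: "slice y pre post [A, B] = (\<Sum>l\<in>B. slice y pre post [A \<union> B - {l}, {l}])"
    unfolding T by auto
  from e1 have "y (pre @ [A, B] @ post) = - y (pre @ [B, A] @ post)" by (simp add: slice_def)
  moreover from e2 have "y (pre @ [A, B] @ post) = (\<Sum>l\<in>B. y (pre @ [A \<union> B - {l}, {l}] @ post))"
    by (simp add: slice_def)
  ultimately show ?thesis by blast
qed

fun ninv :: "nat list \<Rightarrow> nat" where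
  "ninv [] = 0"
| "ninv (x # xs) = length (filter (\<lambda>y. y < x) xs) + ninv xs"

lemma ninv_swap:
  "ninv (xs @ p # q # ys) + (if p < q then 1 else 0) = ninv (xs @ q # p # ys) + (if q < p then 1 else 0)"
  by (induction xs) auto

lemma sign_swap:
  assumes "p \<noteq> q"
  shows "((-1::'a::field) ^ ninv (xs @ q # p # ys)) = - ((-1) ^ ninv (xs @ p # q # ys))"
proof (cases "p < q")
  case True
  then have "ninv (xs @ q # p # ys) = Suc (ninv (xs @ p # q # ys))"
    using ninv_swap[of xs p q ys] by simp
  then show ?thesis by simp
next
  case False
  then have "ninv (xs @ p # q # ys) = Suc (ninv (xs @ q # p # ys))"
    using ninv_swap[of xs p q ys] assms by simp
  then show ?thesis by simp
qed

definition bas :: "nat \<Rightarrow> nat set \<Rightarrow> nat set \<Rightarrow> nat set list \<Rightarrow> 'a::field" where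
  "bas k S J Bs = (if ordpart k S Bs \<and> (\<forall>B\<in>set Bs. card (B \<inter> J) = 1)
     then (-1) ^ ninv (map (\<lambda>B. the_elem (B \<inter> J)) Bs) else 0)"

lemma length2_cases:
  assumes "length Ls = 2" obtains A B where "Ls = [A, B]"
  using assms by (metis (no_types, opaque_lifting) length_0_conv length_Suc_conv numeral_2_eq_2)

lemma bas_slice:
  "slice (bas k S J :: nat set list \<Rightarrow> 'a::field) pre post \<in> module.span scl (rels k (S - \<Union>(set pre) - \<Union>(set post)))"
proof (cases "\<exists>A0 B0. ordpart k S (pre @ [A0, B0] @ post) \<and> (\<forall>B\<in>set (pre @ [A0, B0] @ post). card (B \<inter> J) = 1)")
  case False
  have "slice (bas k S J :: nat set list \<Rightarrow> 'a::field) pre post = 0"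
  proof
    fix Ls :: "nat set list"
    show "slice (bas k S J) pre post Ls = (0 :: nat set list \<Rightarrow> 'a) Ls"
    proof (cases "length Ls = 2")
      case True
      then obtain A B where "Ls = [A, B]" by (rule length2_cases)
      then show ?thesis using False by (auto simp: slice_def bas_def)
    qed (simp add: slice_def)
  qed
  then show ?thesis by (simp add: V.span_zero)
next
  case True
  let ?T = "S - \<Union>(set pre) - \<Union>(set post)"
  from True obtain A0 B0 where op0: "ordpart k S (pre @ [A0, B0] @ post)"
    and c0: "\<forall>B\<in>set (pre @ [A0, B0] @ post). card (B \<inter> J) = 1" by blast
  from c0 obtain p where p: "A0 \<inter> J = {p}" by (auto simp: card_1_singleton_iff)
  from c0 obtain q where q: "B0 \<inter> J = {q}" by (auto simp: card_1_singleton_iff)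
  have ctx: "\<forall>C\<in>set pre \<union> set post. card (C \<inter> J) = 1" using c0 by auto
  have opT0: "ordpart k ?T [A0, B0]" using ordpart_mid[OF op0] op0 by blast
  have T0: "?T = A0 \<union> B0" and dj0: "A0 \<inter> B0 = {}" using opT0 unfolding ordpart_alt by auto
  have pq: "p \<in> ?T" "q \<in> ?T" "p \<noteq> q" using p q T0 dj0 by auto
  have TJ: "?T \<inter> J = {p, q}" using p q T0 by auto
  obtain d where cT: "card ?T = 2 + d * (k - 1)" using card_two_blocks[OF opT0] by blast
  have relin: "rel k ?T p q \<in> rels k ?T" unfolding rels_def using pq cT by blast
  define rp where "rp = map (\<lambda>B. the_elem (B \<inter> J)) pre"
  define rq where "rq = map (\<lambda>B. the_elem (B \<inter> J)) post"
  define \<epsilon> :: 'a where "\<epsilon> = (-1) ^ ninv (rp @ p # q # rq)"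
  have key: "bas k S J (pre @ [A, B] @ post) = \<epsilon> * rel k ?T p q [A, B]" for A B
  proof (cases "ordpart k ?T [A, B]")
    case False
    then have "\<not> ordpart k S (pre @ [A, B] @ post)" using ordpart_mid[OF op0] by blast
    then show ?thesis using False by (simp add: bas_def rel_def)
  next
    case opT: True
    then have op: "ordpart k S (pre @ [A, B] @ post)" using ordpart_mid[OF op0] by blast
    have T: "?T = A \<union> B" and dj: "A \<inter> B = {}" using opT unfolding ordpart_alt by auto
    have AJ: "A \<inter> J \<subseteq> {p, q}" "B \<inter> J \<subseteq> {p, q}" using TJ T by auto
    show ?thesis
    proof (cases "p \<in> A \<and> q \<in> B")
      case True
      then have "A \<inter> J = {p}" "B \<inter> J = {q}" using AJ dj p q by auto
      moreover have "\<not> (q \<in> A \<and> p \<in> B)" using True dj by auto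
      ultimately show ?thesis using op opT ctx True
        by (simp add: bas_def rel_def \<epsilon>_def rp_def rq_def)
    next
      case F1: False
      show ?thesis
      proof (cases "q \<in> A \<and> p \<in> B")
        case True
        then have AJ': "A \<inter> J = {q}" "B \<inter> J = {p}" using AJ dj p q by auto
        have "bas k S J (pre @ [A, B] @ post) = ((-1::'a) ^ ninv (rp @ q # p # rq))"
          using op ctx AJ' by (simp add: bas_def rp_def rq_def)
        also have "\<dots> = - \<epsilon>" unfolding \<epsilon>_def by (rule sign_swap[OF pq(3)])
        moreover have "\<not> (p \<in> A \<and> q \<in> B)" using True dj by auto
        then have "rel k ?T p q [A, B] = (-1::'a)" using opT True by (auto simp: rel_def)
        ultimately show ?thesis by simp
      next
        case F2: False
        have "card (A \<inter> J) \<noteq> 1 \<or> card (B \<inter> J) \<noteq> 1"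
        proof -
          have "p \<in> A \<union> B" "q \<in> A \<union> B" using pq T by auto
          with F1 F2 have "(A \<inter> J = {} ) \<or> (B \<inter> J = {})" using AJ dj by auto
          then show ?thesis by auto
        qed
        then have "bas k S J (pre @ [A, B] @ post) = (0::'a)" by (auto simp: bas_def)
        moreover have "rel k ?T p q [A, B] = (0::'a)" using F1 F2 by (auto simp: rel_def)
        ultimately show ?thesis by simp
      qed
    qed
  qed
  have "slice (bas k S J :: nat set list \<Rightarrow> 'a::field) pre post = scl \<epsilon> (rel k ?T p q)"
  proof
    fix Ls :: "nat set list"
    show "slice (bas k S J) pre post Ls = scl \<epsilon> (rel k ?T p q) Ls"
    proof (cases "length Ls = 2")
      case True
      then obtain A B where "Ls = [A, B]" by (rule length2_cases)
      then show ?thesis using key by (simp add: slice_def)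
    qed (simp add: slice_def rel_def)
  qed
  then show ?thesis using V.span_scale[OF V.span_base[OF relin]] by simp
qed

lemma bas_koszul: "(bas k S J :: nat set list \<Rightarrow> 'a::field) \<in> koszul_coalg k S"
  using bas_slice[of k S J] unfolding koszul_coalg_def slice_def
  by (auto simp: bas_def)

lemma pd_singles: "pd (map (\<lambda>l. {l}) ls) \<longleftrightarrow> distinct ls"
  by (induction ls) auto

lemma ordpart_perm:
  assumes "ordpart k S (pre @ map (\<lambda>l. {l}) ls)" "distinct ls'" "set ls' = set ls"
  shows "ordpart k S (pre @ map (\<lambda>l. {l}) ls')"
proof -
  have "ordpart k S (pre @ map (\<lambda>l. {l}) ls @ [])" using assms(1) by simp
  note m = ordpart_mid[OF this]
  have "ordpart k (S - \<Union>(set pre) - \<Union>(set [])) (map (\<lambda>l. {l}) ls)"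
    using m assms(1) by simp
  then have "ordpart k (S - \<Union>(set pre) - \<Union>(set [])) (map (\<lambda>l. {l}) ls')"
    using assms(2,3) by (simp add: ordpart_singles)
  then show ?thesis using m by simp
qed

lemma insort_reduce:
  assumes y: "y \<in> koszul_coalg k S"
  shows "ordpart k S (pre @ map (\<lambda>l. {l}) (a # xs)) \<Longrightarrow>
    \<exists>c. y (pre @ map (\<lambda>l. {l}) (a # xs)) = c * y (pre @ map (\<lambda>l. {l}) (insort a xs))"
proof (induction xs arbitrary: pre)
  case Nil
  then show ?case by (intro exI[of _ 1]) simp
next
  case (Cons b xs)
  show ?case
  proof (cases "a \<le> b")
    case True
    then show ?thesis by (intro exI[of _ 1]) simp
  next
    case False
    have op: "ordpart k S (pre @ [{a}, {b}] @ map (\<lambda>l. {l}) xs)" using Cons.prems by simp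
    have e1: "y (pre @ [{a}, {b}] @ map (\<lambda>l. {l}) xs) = - y (pre @ [{b}, {a}] @ map (\<lambda>l. {l}) xs)"
      using S12[OF y op] by blast
    have d: "distinct (a # b # xs)" using Cons.prems
      unfolding ordpart_alt pd_append pd_singles by simp
    have op2: "ordpart k S ((pre @ [{b}]) @ map (\<lambda>l. {l}) (a # xs))"
      using ordpart_perm[OF Cons.prems, of "b # a # xs"] d by auto
    obtain c where c: "y ((pre @ [{b}]) @ map (\<lambda>l. {l}) (a # xs))
       = c * y ((pre @ [{b}]) @ map (\<lambda>l. {l}) (insort a xs))"
      using Cons.IH[OF op2] by blast
    show ?thesis using e1 c False
      by (intro exI[of _ "- c"]) simp
  qed
qed

lemma sort_reduce:
  assumes y: "y \<in> koszul_coalg k S"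
  shows "ordpart k S (pre @ map (\<lambda>l. {l}) ls) \<Longrightarrow>
    \<exists>c. y (pre @ map (\<lambda>l. {l}) ls) = c * y (pre @ map (\<lambda>l. {l}) (sort ls))"
proof (induction ls arbitrary: pre)
  case Nil
  then show ?case by (intro exI[of _ 1]) simp
next
  case (Cons a ls)
  have op1: "ordpart k S ((pre @ [{a}]) @ map (\<lambda>l. {l}) ls)" using Cons.prems by simp
  obtain c1 where c1: "y ((pre @ [{a}]) @ map (\<lambda>l. {l}) ls) = c1 * y ((pre @ [{a}]) @ map (\<lambda>l. {l}) (sort ls))"
    using Cons.IH[OF op1] by blast
  have d: "distinct (a # ls)" using Cons.prems
    unfolding ordpart_alt pd_append pd_singles by simp
  have op2: "ordpart k S (pre @ map (\<lambda>l. {l}) (a # sort ls))"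
    using ordpart_perm[OF Cons.prems, of "a # sort ls"] d by auto
  obtain c2 where c2: "y (pre @ map (\<lambda>l. {l}) (a # sort ls)) = c2 * y (pre @ map (\<lambda>l. {l}) (insort a (sort ls)))"
    using insort_reduce[OF y op2] by blast
  show ?case using c1 c2 by (intro exI[of _ "c1 * c2"]) simp
qed

definition Lam :: "nat \<Rightarrow> nat \<Rightarrow> nat set set" where
  "Lam k n = {L. L \<subseteq> {2..n} \<and> gen_arity k ({1..n} - L)}"

definition PL :: "nat \<Rightarrow> nat set \<Rightarrow> nat set list" where
  "PL n L = ({1..n} - L) # map (\<lambda>l. {l}) (sorted_list_of_set L)"

lemma vanish_base1:
  assumes y: "y \<in> koszul_coalg k {1..n}" and z: "\<forall>L\<in>Lam k n. y (PL n L) = 0" and B: "1 \<in> B"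
  shows "y (B # map (\<lambda>l. {l}) ls) = 0"
proof (cases "ordpart k {1..n} (B # map (\<lambda>l. {l}) ls)")
  case False
  then show ?thesis using koszul_zero[OF y] by blast
next
  case True
  then have d: "distinct ls" and dj: "B \<inter> set ls = {}" and u: "B \<union> set ls = {1..n}"
    and g: "gen_arity k B"
    unfolding ordpart_alt by (auto simp: pd_singles)
  have Bs: "B = {1..n} - set ls" using dj u by auto
  have L: "set ls \<in> Lam k n" unfolding Lam_def using dj u B Bs g
    by (auto simp: subset_iff) (metis IntI atLeastAtMost_iff empty_iff le_antisym not_less_eq_eq numeral_2_eq_2 UnI2)
  have P: "PL n (set ls) = B # map (\<lambda>l. {l}) (sort ls)"
    unfolding PL_def Bs using d by (simp add: sorted_list_of_set_sort_remdups distinct_remdups_id)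
  obtain c where "y ([B] @ map (\<lambda>l. {l}) ls) = c * y ([B] @ map (\<lambda>l. {l}) (sort ls))"
    using sort_reduce[OF y, of "[B]" ls] True by auto
  moreover have "y (PL n (set ls)) = 0" using z L by blast
  ultimately show ?thesis using P by simp
qed

lemma vanish_base2:
  assumes y: "y \<in> koszul_coalg k {1..n}" and z: "\<forall>L\<in>Lam k n. y (PL n L) = 0" and n1: "1 \<le> n"
  shows "y (B # map (\<lambda>l. {l}) ls) = 0"
proof (cases "ordpart k {1..n} (B # map (\<lambda>l. {l}) ls)")
  case False
  then show ?thesis using koszul_zero[OF y] by blast
next
  case op: True
  show ?thesis
  proof (cases "1 \<in> B")
    case True
    then show ?thesis using vanish_base1[OF y z] by blast
  next
    case nB: False
    from op have d: "distinct ls" and dj: "B \<inter> set ls = {}" and u: "B \<union> set ls = {1..n}"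
      unfolding ordpart_alt by (auto simp: pd_singles)
    have one: "1 \<in> set ls" using u nB n1 by auto
    have mn: "Min (set ls) = 1"
    proof (rule Min_eqI)
      show "\<And>y. y \<in> set ls \<Longrightarrow> 1 \<le> y" using u by auto
    qed (use one in auto)
    define ls' where "ls' = sorted_list_of_set (set ls - {1})"
    have srt: "sort ls = 1 # ls'"
    proof -
      have "sort ls = sorted_list_of_set (set ls)"
        using d by (simp add: sorted_list_of_set_sort_remdups distinct_remdups_id)
      also have "\<dots> = 1 # ls'" unfolding ls'_def
        using sorted_list_of_set_nonempty[of "set ls"] one mn by (cases ls) auto
      finally show ?thesis .
    qed
    obtain c where c: "y ([B] @ map (\<lambda>l. {l}) ls) = c * y ([B] @ map (\<lambda>l. {l}) (sort ls))"
      using sort_reduce[OF y, of "[B]" ls] op by auto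
    have op2: "ordpart k {1..n} ([B] @ map (\<lambda>l. {l}) (1 # ls'))"
      using ordpart_perm[of k "{1..n}" "[B]" ls "1 # ls'"] op srt d
      by (metis append_Cons append_Nil distinct_sort set_sort)
    then have op2': "ordpart k {1..n} ([] @ [B, {1}] @ map (\<lambda>l. {l}) ls')" by simp
    have e1: "y ([] @ [B, {1}] @ map (\<lambda>l. {l}) ls') = - y ([] @ [{1}, B] @ map (\<lambda>l. {l}) ls')"
      using S12[OF y op2'] by blast
    have op3: "ordpart k {1..n} ([] @ [{1}, B] @ map (\<lambda>l. {l}) ls')"
      using ordpart_mid[OF op2', of "[{1}, B]"] ordpart_mid[OF op2', of "[B, {1}]"] op2' ordpart_swap
      by blast
    have e2: "y ([] @ [{1}, B] @ map (\<lambda>l. {l}) ls') = (\<Sum>l\<in>B. y ([] @ [{1} \<union> B - {l}, {l}] @ map (\<lambda>l. {l}) ls'))"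
      using S12[OF y op3] by blast
    have e3: "y ([] @ [{1} \<union> B - {l}, {l}] @ map (\<lambda>l. {l}) ls') = 0" if "l \<in> B" for l
    proof -
      have "1 \<in> {1} \<union> B - {l}" using that nB by auto
      then have "y (({1} \<union> B - {l}) # map (\<lambda>l. {l}) (l # ls')) = 0"
        by (rule vanish_base1[OF y z])
      then show ?thesis by simp
    qed
    show ?thesis using c e1 e2 e3 srt by simp
  qed
qed

lemma vanish_all:
  assumes y: "y \<in> koszul_coalg k {1..n}" and z: "\<forall>L\<in>Lam k n. y (PL n L) = 0" and n: "n \<ge> 1"
  shows "y (Cs @ map (\<lambda>l. {l}) ls) = 0"
proof (induction "length Cs" arbitrary: Cs ls rule: less_induct)
  case less
  show ?case
  proof (cases "rev Cs")
    case Nil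
    then have Cs: "Cs = []" by simp
    show ?thesis
    proof (cases ls)
      case Nil
      have "\<not> ordpart k {1..n} []" using n unfolding ordpart_alt by auto
      then show ?thesis using koszul_zero[OF y] Cs Nil by auto
    next
      case (Cons a ls')
      then show ?thesis using vanish_base2[OF y z n, of "{a}" ls'] Cs by simp
    qed
  next
    case (Cons B R)
    show ?thesis
    proof (cases R)
      case Nil
      then have "Cs = [B]" using Cons by (metis rev_singleton_conv)
      then show ?thesis using vanish_base2[OF y z n] by simp
    next
      case (Cons A R')
      have Cs: "Cs = rev R' @ [A, B]" using \<open>rev Cs = B # R\<close> Cons
        by (metis append.assoc append_Cons append_Nil rev.simps(2) rev_rev_ident)
      show ?thesis
      proof (cases "ordpart k {1..n} (rev R' @ [A, B] @ map (\<lambda>l. {l}) ls)")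
        case False
        then show ?thesis using koszul_zero[OF y] Cs by auto
      next
        case True
        have e: "y (rev R' @ [A, B] @ map (\<lambda>l. {l}) ls)
          = (\<Sum>l\<in>B. y (rev R' @ [A \<union> B - {l}, {l}] @ map (\<lambda>l. {l}) ls))"
          using S12[OF y True] by blast
        have "y (rev R' @ [A \<union> B - {l}, {l}] @ map (\<lambda>l. {l}) ls) = 0" for l
        proof -
          have "length (rev R' @ [A \<union> B - {l}]) < length Cs" using Cs by simp
          then have "y ((rev R' @ [A \<union> B - {l}]) @ map (\<lambda>l. {l}) (l # ls)) = 0"
            by (rule less)
          then show ?thesis by simp
        qed
        then show ?thesis using e Cs by simp
      qed
    qed
  qed
qed

lemma card_Lam:
  assumes k: "k > 1" and n: "n \<ge> 1"
  shows "card (Lam k n) = (\<Sum>p = 0..n. (n - 1) choose (p * (k - 1)))"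
proof -
  define A where "A p = {L. L \<subseteq> {2..n} \<and> card L = n - 1 - p * (k - 1) \<and> p * (k - 1) \<le> n - 1}" for p
  have cardL: "card ({1..n} - L) = n - card L" if "L \<subseteq> {2..n}" for L
  proof -
    have "L \<subseteq> {1..n}" using that by auto
    moreover have "finite L" using that finite_subset by blast
    ultimately show ?thesis by (simp add: card_Diff_subset)
  qed
  have cL: "card L \<le> n - 1" if "L \<subseteq> {2..n}" for L
    using card_mono[OF _ that] by simp
  have eq: "Lam k n = (\<Union>p\<in>{0..n}. A p)"
  proof
    show "Lam k n \<subseteq> (\<Union>p\<in>{0..n}. A p)"
    proof
      fix L assume "L \<in> Lam k n"
      then obtain d where L: "L \<subseteq> {2..n}" and d: "card ({1..n} - L) = 1 + d * (k - 1)"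
        unfolding Lam_def gen_arity_def by auto
      have e: "card L + d * (k - 1) = n - 1" using d cardL[OF L] cL[OF L] by simp
      have "d * 1 \<le> d * (k - 1)" using k by (intro mult_le_mono2) simp
      then have "d \<le> d * (k - 1)" by simp
      then have "d \<le> n" using e by linarith
      then show "L \<in> (\<Union>p\<in>{0..n}. A p)" unfolding A_def using L e by force
    qed
  next
    show "(\<Union>p\<in>{0..n}. A p) \<subseteq> Lam k n"
    proof
      fix L assume "L \<in> (\<Union>p\<in>{0..n}. A p)"
      then obtain p where L: "L \<subseteq> {2..n}" and c: "card L = n - 1 - p * (k - 1)" "p * (k - 1) \<le> n - 1"
        unfolding A_def by auto
      have "card ({1..n} - L) = 1 + p * (k - 1)" using cardL[OF L] c n by simp
      then show "L \<in> Lam k n" unfolding Lam_def gen_arity_def using L by blast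
    qed
  qed
  have fin: "finite (A p)" for p
    unfolding A_def by (rule finite_subset[of _ "Pow {2..n}"]) auto
  have dis: "A p \<inter> A q = {}" if "p \<noteq> q" for p q
  proof -
    have "p * (k - 1) \<noteq> q * (k - 1)" using that k by simp
    show ?thesis
    proof (rule ccontr)
      assume "A p \<inter> A q \<noteq> {}"
      then obtain L where "L \<in> A p" "L \<in> A q" by blast
      then have "card L = n - 1 - p * (k - 1)" "p * (k - 1) \<le> n - 1"
        "card L = n - 1 - q * (k - 1)" "q * (k - 1) \<le> n - 1" unfolding A_def by auto
      then have "p * (k - 1) = q * (k - 1)" by linarith
      then show False using \<open>p * (k - 1) \<noteq> q * (k - 1)\<close> by blast
    qed
  qed
  have cA: "card (A p) = (n - 1) choose (p * (k - 1))" for p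
  proof (cases "p * (k - 1) \<le> n - 1")
    case True
    have "A p = {L. L \<subseteq> {2..n} \<and> card L = n - 1 - p * (k - 1)}" unfolding A_def using True by auto
    then have "card (A p) = (n - 1) choose (n - 1 - p * (k - 1))" by (simp add: n_subsets)
    then show ?thesis using binomial_symmetric[OF True] by simp
  next
    case False
    then have "A p = {}" unfolding A_def by auto
    then show ?thesis using False by simp
  qed
  show ?thesis unfolding eq
    by (subst card_UN_disjoint) (use fin dis cA in auto)
qed

lemma ninv_sorted: "sorted xs \<Longrightarrow> ninv xs = 0"
proof (induction xs)
  case (Cons x xs)
  then have "filter (\<lambda>y. y < x) xs = []" by (auto simp: filter_empty_conv)
  with Cons show ?case by simp
qed simp

lemma ordpart_PL:
  assumes "L \<in> Lam k n"
  shows "ordpart k {1..n} (PL n L)"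
proof -
  have L: "L \<subseteq> {2..n}" "gen_arity k ({1..n} - L)" using assms unfolding Lam_def by auto
  have f: "finite L" using L finite_subset by blast
  show ?thesis unfolding PL_def ordpart_alt using L f
    by (auto simp: pd_singles gen_arity_single)
qed

lemma diag:
  assumes L: "L \<in> Lam k n" and L': "L' \<in> Lam k n" and n: "n \<ge> 1"
  shows "(bas k {1..n} (insert 1 L) (PL n L') :: 'a::field) = (if L = L' then 1 else 0)"
proof -
  have Ls: "L \<subseteq> {2..n}" "L' \<subseteq> {2..n}" using L L' unfolding Lam_def by auto
  have f: "finite L" "finite L'" using Ls finite_subset by auto
  note op = ordpart_PL[OF L']
  show ?thesis
  proof (cases "L = L'")
    case True
    have b1: "({1..n} - L) \<inter> insert 1 L = {1}" using n Ls by auto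
    have b2: "\<forall>l\<in>L. {l} \<inter> insert 1 L = {l}" by auto
    have m: "map (\<lambda>B. the_elem (B \<inter> insert 1 L)) (map (\<lambda>l. {l}) (sorted_list_of_set L))
        = sorted_list_of_set L"
      unfolding map_map
    proof (rule map_idI)
      fix x assume "x \<in> set (sorted_list_of_set L)"
      then have "x \<in> L" using f by simp
      then have "{x} \<inter> insert 1 L = {x}" by auto
      then show "((\<lambda>B. the_elem (B \<inter> insert 1 L)) \<circ> (\<lambda>l. {l})) x = x" by simp
    qed
    have s: "sorted (1 # sorted_list_of_set L)" using Ls f by auto
    have op': "ordpart k {1..n} (PL n L)" using op True by simp
    have c1: "card (({1..n} - L) \<inter> insert 1 L) = 1" using b1 by simp
    have cond: "ordpart k {1..n} (PL n L) \<and> (\<forall>B\<in>set (PL n L). card (B \<inter> insert 1 L) = 1)"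
      using op' c1 f unfolding PL_def by auto
    have "(bas k {1..n} (insert 1 L) (PL n L) :: 'a) = (-1) ^ ninv (map (\<lambda>B. the_elem (B \<inter> insert 1 L)) (PL n L))"
      unfolding bas_def using cond by (rule if_P)
    also have "map (\<lambda>B. the_elem (B \<inter> insert 1 L)) (PL n L) = 1 # sorted_list_of_set L"
      unfolding PL_def by (simp only: list.map m b1 the_elem_eq)
    finally have "(bas k {1..n} (insert 1 L) (PL n L) :: 'a) = 1"
      by (simp only: ninv_sorted[OF s]) simp
    then show ?thesis using True by simp
  next
    case False
    have "\<not> (\<forall>B\<in>set (PL n L'). card (B \<inter> insert 1 L) = 1)"
    proof
      assume H: "\<forall>B\<in>set (PL n L'). card (B \<inter> insert 1 L) = 1"
      show False
      proof (cases "L' \<subseteq> L")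
        case False
        then obtain l where l: "l \<in> L'" "l \<notin> L" by auto
        have "l \<noteq> 1" using l Ls by auto
        then have "{l} \<inter> insert 1 L = {}" using l by auto
        moreover have "{l} \<in> set (PL n L')" unfolding PL_def using l f by auto
        ultimately show False using H by force
      next
        case True
        then obtain l where l: "l \<in> L" "l \<notin> L'" using \<open>L \<noteq> L'\<close> by auto
        have sub: "{1, l} \<subseteq> ({1..n} - L') \<inter> insert 1 L" using l Ls n by auto
        have "l \<noteq> 1" using l Ls by auto
        then have "card {1, l} = 2" by simp
        then have "2 \<le> card (({1..n} - L') \<inter> insert 1 L)"
          using card_mono[OF _ sub] by simp
        moreover have "card (({1..n} - L') \<inter> insert 1 L) = 1" using H unfolding PL_def by simp
        ultimately show False by simp
      qed
    qed
    then show ?thesis using False unfolding bas_def by auto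
  qed
qed

lemma koszul_subspace: "V.subspace (koszul_coalg k S :: (nat set list \<Rightarrow> 'a::field) set)"
proof (rule V.subspaceI)
  show "(0 :: nat set list \<Rightarrow> 'a) \<in> koszul_coalg k S"
  proof -
    have "(\<lambda>L. if length L = 2 then (0 :: nat set list \<Rightarrow> 'a) (pre @ L @ post) else 0) = 0" for pre post
      by auto
    then show ?thesis unfolding koszul_coalg_def by (auto simp: V.span_zero)
  qed
next
  fix x y :: "nat set list \<Rightarrow> 'a" assume x: "x \<in> koszul_coalg k S" and y: "y \<in> koszul_coalg k S"
  have "slice (x + y) pre post = slice x pre post + slice y pre post" for pre post
    by (auto simp: slice_def)
  then have "slice (x + y) pre post \<in> module.span scl (rels k (S - \<Union>(set pre) - \<Union>(set post)))" for pre post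
    using V.span_add[OF koszul_slice[OF x] koszul_slice[OF y]] by simp
  then show "x + y \<in> koszul_coalg k S"
    using x y unfolding koszul_coalg_def slice_def by auto
next
  fix c :: 'a and x :: "nat set list \<Rightarrow> 'a" assume x: "x \<in> koszul_coalg k S"
  have "slice (scl c x) pre post = scl c (slice x pre post)" for pre post
    by (auto simp: slice_def)
  then have "slice (scl c x) pre post \<in> module.span scl (rels k (S - \<Union>(set pre) - \<Union>(set post)))" for pre post
    using V.span_scale[OF koszul_slice[OF x]] by simp
  then show "scl c x \<in> koszul_coalg k S"
    using x unfolding koszul_coalg_def slice_def by auto
qed

lemma dim_koszul:
  assumes k: "k > 1" and n: "n \<ge> 1"
  shows "V.dim (koszul_coalg k {1..n} :: (nat set list \<Rightarrow> 'a::field) set) = card (Lam k n)"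
proof -
  define b :: "nat set \<Rightarrow> nat set list \<Rightarrow> 'a" where "b L = bas k {1..n} (insert 1 L)" for L
  define X where "X = b ` Lam k n"
  have finL: "finite (Lam k n)"
    unfolding Lam_def by (rule finite_subset[of _ "Pow {2..n}"]) auto
  have dg: "b L (PL n L') = (if L = L' then 1 else 0)" if "L \<in> Lam k n" "L' \<in> Lam k n" for L L'
    unfolding b_def using diag[OF that n] by simp
  have inj: "inj_on b (Lam k n)"
  proof (rule inj_onI)
    fix L L' assume L: "L \<in> Lam k n" and L': "L' \<in> Lam k n" and e: "b L = b L'"
    have "b L (PL n L) = b L' (PL n L)" using e by simp
    then show "L = L'" using dg[OF L L] dg[OF L' L] by (auto split: if_splits)
  qed
  have cardX: "card X = card (Lam k n)" unfolding X_def using card_image[OF inj] .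
  have finX: "finite X" unfolding X_def using finL by simp
  have sub: "X \<subseteq> koszul_coalg k {1..n}" unfolding X_def b_def using bas_koszul by blast
  have eval: "(\<Sum>L\<in>Lam k n. scl (u L) (b L)) (PL n L0) = u L0" if L0: "L0 \<in> Lam k n" for u L0
  proof -
    have "(\<Sum>L\<in>Lam k n. scl (u L) (b L)) (PL n L0) = (\<Sum>L\<in>Lam k n. u L * (if L = L0 then 1 else 0))"
      unfolding sum_fun_apply using dg[OF _ L0] by (simp add: sum_fun_apply)
    also have "\<dots> = u L0" using finL L0 by (simp add: if_distrib cong: if_cong)
    finally show ?thesis .
  qed
  have ind: "V.independent X"
  proof
    assume "V.dependent X"
    then obtain u where u: "\<exists>v\<in>X. u v \<noteq> 0" "(\<Sum>v\<in>X. scl (u v) v) = 0"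
      using V.dependent_finite[OF finX] by blast
    from u(1) obtain L0 where L0: "L0 \<in> Lam k n" "u (b L0) \<noteq> 0" unfolding X_def by blast
    have "(\<Sum>v\<in>X. scl (u v) v) = (\<Sum>L\<in>Lam k n. scl (u (b L)) (b L))"
      unfolding X_def by (rule sum.reindex[OF inj, unfolded comp_def])
    then have "(\<Sum>L\<in>Lam k n. scl (u (b L)) (b L)) = 0" using u(2) by simp
    then have "(\<Sum>L\<in>Lam k n. scl (u (b L)) (b L)) (PL n L0) = 0" by simp
    then show False using eval[OF L0(1), of "\<lambda>L. u (b L)"] L0(2) by simp
  qed
  have spn: "koszul_coalg k {1..n} \<subseteq> V.span X"
  proof
    fix x :: "nat set list \<Rightarrow> 'a" assume x: "x \<in> koszul_coalg k {1..n}"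
    define s where "s = (\<Sum>L\<in>Lam k n. scl (x (PL n L)) (b L))"
    define y where "y = x - s"
    have sC: "s \<in> koszul_coalg k {1..n}" unfolding s_def
      by (rule V.subspace_sum[OF koszul_subspace]) (use sub X_def koszul_subspace V.subspace_scale in blast)
    have yC: "y \<in> koszul_coalg k {1..n}" unfolding y_def
      by (rule V.subspace_diff[OF koszul_subspace x sC])
    have z: "\<forall>L\<in>Lam k n. y (PL n L) = 0"
      using eval[of _ "\<lambda>L. x (PL n L)"] unfolding y_def s_def by simp
    have "y Bs = 0" for Bs using vanish_all[OF yC z n, of Bs "[]"] by simp
    then have "y = 0" by (simp add: fun_eq_iff)
    then have "x = s" unfolding y_def by simp
    moreover have "s \<in> V.span X" unfolding s_def X_def
      by (rule V.span_sum) (use V.span_scale V.span_base in blast)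
    ultimately show "x \<in> V.span X" by simp
  qed
  show ?thesis using V.dim_unique[OF sub spn ind cardX] .
qed

theorem mainTheorem12:
  fixes k n :: nat
  assumes "k > 1" and "n \<ge> 1"
  shows "dual_dim TYPE('a::field_char_0) k {1..n} = (\<Sum>p = 0..n. (n - 1) choose (p * (k - 1)))"
  unfolding dual_dim_def using dim_koszul[OF assms] card_Lam[OF assms] by simp

end
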